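(* Let $N\geqslant 2$, $d\geqslant 1$ and $1\leqslant r\leqslant N$ be integers. Let $l_0,\dots,l_r$ be linearly independent linear forms on ${\mathbb C}^{N+1}$ and $\Pi=\{l_0=\dots=l_r=0\}\subset{\mathbb P}^N$. For each $i=1,\dots,r$ fix pairwise distinct constants $\lambda_{i0},\dots,\lambda_{i,d-1}\in{\mathbb C}$ with $\lambda_{i0}=0$. For $\underline e=(e_1,\dots,e_r)\in{\mathbb Z}^r_{\geqslant0}$ with all $e_i\leqslant d-1$ let $\Theta(\underline e)=\{l_i-\lambda_{i,e_i}l_0=0,\ i=1,\dots,r\}\subset{\mathbb P}^N$ (a linear subspace of codimension $r$ containing $\Pi$), and $|\underline e|=e_1+\dots+e_r$. Let $m\leqslant N-r+1$, and for every $\underline e$ with $|\underline e|\leqslant d-3$ let $S(\underline e)\subset\Theta(\underline e)\setminus\Pi$ be a set of $m$ linearly independent points. Then the set of $g\in{\cal P}_{d,N+1}$ satisfying $S(\underline e)\subset\mathop{\rm Sing}(g|_{\Theta(\underline e)})$ for all $\underline e\in{\mathbb Z}^r_{\geqslant0}$ with $|\underline e|\leqslant d-3$ is a linear subspace of ${\cal P}_{d,N+1}$ of codimension $m(N-r+1)|\Delta|$, where $\Delta=\{e_1\geqslant0,\dots,e_r\geqslant0,\ e_1+\dots+e_r\leqslant d-3\}\subset{\mathbb R}^r$ and $|\Delta|=\#(\Delta\cap{\mathbb Z}^r)$.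
   Context: ${\cal P}_{d,N+1}$ is the complex vector space of homogeneous polynomials of degree $d$ in $x_0,\dots,x_N$. For a linear subspace $\Theta\cong{\mathbb P}^{N-r}$, $\mathop{\rm Sing}(g|_\Theta)$ is the singular set of the hypersurface $\{g|_\Theta=0\}$ in $\Theta$, equal to $\Theta$ if $g|_\Theta\equiv0$. *)

theory Defs
  imports Complex_Main "HOL-Library.Function_Algebras"
begin

text \<open>Vectors of C^(N+1) are functions nat => complex (coordinates 0..N are used).
 A homogeneous polynomial of degree d in x_0..x_N is represented by its coefficient
 function on exponent vectors (nat => nat), supported on the degree-d monomials.\<close>

definition cscale :: "complex \<Rightarrow> ('a \<Rightarrow> complex) \<Rightarrow> ('a \<Rightarrow> complex)" where
  "cscale a f = (\<lambda>x. a * f x)"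

lemma vector_space_cscale: "vector_space cscale"
  by unfold_locales (auto simp: cscale_def fun_eq_iff algebra_simps)

definition mons :: "nat \<Rightarrow> nat \<Rightarrow> (nat \<Rightarrow> nat) set" where
  "mons N d = {\<alpha>. (\<forall>j. N < j \<longrightarrow> \<alpha> j = 0) \<and> (\<Sum>j\<le>N. \<alpha> j) = d}"

definition Pspace :: "nat \<Rightarrow> nat \<Rightarrow> ((nat \<Rightarrow> nat) \<Rightarrow> complex) set" where
  "Pspace N d = {g. \<forall>\<alpha>. \<alpha> \<notin> mons N d \<longrightarrow> g \<alpha> = 0}"

definition peval :: "nat \<Rightarrow> nat \<Rightarrow> ((nat \<Rightarrow> nat) \<Rightarrow> complex) \<Rightarrow> (nat \<Rightarrow> complex) \<Rightarrow> complex" where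
  "peval N d g x = (\<Sum>\<alpha>\<in>mons N d. g \<alpha> * (\<Prod>k\<le>N. x k ^ \<alpha> k))"

definition pderiv_at :: "nat \<Rightarrow> nat \<Rightarrow> ((nat \<Rightarrow> nat) \<Rightarrow> complex) \<Rightarrow> nat \<Rightarrow> (nat \<Rightarrow> complex) \<Rightarrow> complex" where
  "pderiv_at N d g j x = (\<Sum>\<alpha>\<in>mons N d. g \<alpha> *
      (of_nat (\<alpha> j) * x j ^ (\<alpha> j - 1) * (\<Prod>k\<in>{..N} - {j}. x k ^ \<alpha> k)))"

definition ddir :: "nat \<Rightarrow> nat \<Rightarrow> ((nat \<Rightarrow> nat) \<Rightarrow> complex) \<Rightarrow> (nat \<Rightarrow> complex) \<Rightarrow> (nat \<Rightarrow> complex) \<Rightarrow> complex" where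
  "ddir N d g x v = (\<Sum>j\<le>N. v j * pderiv_at N d g j x)"

definition linf :: "nat \<Rightarrow> (nat \<Rightarrow> complex) \<Rightarrow> (nat \<Rightarrow> complex) \<Rightarrow> complex" where
  "linf N a x = (\<Sum>j\<le>N. a j * x j)"

text \<open>The point [p] (p in the cone V of a linear subspace Theta of P^N) lies in
 Sing(g|Theta): g(p)=0 and all derivatives of g|Theta vanish at p, i.e. Dg(p)(v)=0
 for all v in V.  (If g|Theta = 0 this holds for every p, giving Sing = Theta.)\<close>
definition sing_at :: "nat \<Rightarrow> nat \<Rightarrow> ((nat \<Rightarrow> nat) \<Rightarrow> complex) \<Rightarrow> (nat \<Rightarrow> complex) set \<Rightarrow> (nat \<Rightarrow> complex) \<Rightarrow> bool" where
  "sing_at N d g V p \<longleftrightarrow> p \<in> V \<and> peval N d g p = 0 \<and> (\<forall>v\<in>V. ddir N d g p v = 0)"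

definition lin_indep :: "nat \<Rightarrow> nat \<Rightarrow> (nat \<Rightarrow> nat \<Rightarrow> complex) \<Rightarrow> bool" where
  "lin_indep N n u \<longleftrightarrow> (\<forall>c. (\<forall>j\<le>N. (\<Sum>k<n. c k * u k j) = 0) \<longrightarrow> (\<forall>k<n. c k = 0))"

text \<open>cone over Theta(e) = {l_i - lambda_{i,e_i} l_0 = 0, i=1..r}\<close>
definition Theta_cone :: "nat \<Rightarrow> nat \<Rightarrow> (nat \<Rightarrow> nat \<Rightarrow> complex) \<Rightarrow> (nat \<Rightarrow> nat \<Rightarrow> complex)
     \<Rightarrow> (nat \<Rightarrow> nat) \<Rightarrow> (nat \<Rightarrow> complex) set" where
  "Theta_cone N r l lam e = {x. (\<forall>j. N < j \<longrightarrow> x j = 0) \<and>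
      (\<forall>i\<in>{1..r}. linf N (l i) x - lam i (e i) * linf N (l 0) x = 0)}"

definition Pi_cone :: "nat \<Rightarrow> nat \<Rightarrow> (nat \<Rightarrow> nat \<Rightarrow> complex) \<Rightarrow> (nat \<Rightarrow> complex) set" where
  "Pi_cone N r l = {x. (\<forall>j. N < j \<longrightarrow> x j = 0) \<and> (\<forall>i\<le>r. linf N (l i) x = 0)}"

text \<open>lattice points of Delta: e in Z^r_{>=0} (stored as nat => nat, zero outside 1..r)
 with e_1+...+e_r <= d-3 (integer inequality)\<close>
definition Delta :: "nat \<Rightarrow> nat \<Rightarrow> (nat \<Rightarrow> nat) set" where
  "Delta r d = {e. (\<forall>i. i \<notin> {1..r} \<longrightarrow> e i = 0) \<and> int (\<Sum>i\<in>{1..r}. e i) \<le> int d - 3}"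

end

theory Submission
  imports Defs "HOL-Library.FuncSet"
begin


context vector_space begin

lemma span_disjoint_Int:
  assumes "independent B" "C \<subseteq> B" "D \<subseteq> B" "C \<inter> D = {}" "x \<in> span C" "x \<in> span D"
  shows "x = 0"
proof -
  have rC: "representation B x = representation C x"
    using representation_extend[OF assms(1) assms(5) assms(2)] .
  have rD: "representation B x = representation D x"
    using representation_extend[OF assms(1) assms(6) assms(3)] .
  have z: "\<And>b. representation B x b = 0"
  proof -
    fix b show "representation B x b = 0"
      using representation_ne_zero[of C x b] representation_ne_zero[of D x b] rC rD assms(4) by auto
  qed
  have xB: "x \<in> span B" using span_mono[OF assms(2)] assms(5) by auto
  have "x = (\<Sum>b | representation B x b \<noteq> 0. representation B x b *s b)"
    using sum_nonzero_representation_eq[OF assms(1) xB] by simp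
  also have "\<dots> = 0" using z by simp
  finally show ?thesis .
qed

lemma dim_subspace_eq:
  assumes "subspace U" "U \<subseteq> V" "finite F" "V \<subseteq> span F" "dim U = dim V"
  shows "V \<subseteq> U"
proof
  fix v assume v: "v \<in> V"
  obtain B where B: "B \<subseteq> U" "independent B" "U \<subseteq> span B" "card B = dim U"
    using basis_exists by blast
  obtain C where C: "C \<subseteq> V" "independent C" "V \<subseteq> span C" "card C = dim V"
    using basis_exists by blast
  have "C \<subseteq> span F" using C(1) assms(4) by (rule order_trans)
  then have fC: "finite C" using independent_span_bound[OF assms(3) C(2)] by simp
  show "v \<in> U"
  proof (rule ccontr)
    assume vU: "v \<notin> U"
    have "span B \<subseteq> U" using span_minimal[OF B(1) assms(1)] .
    then have vB: "v \<notin> span B" using vU by (rule contra_subsetD)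
    then have ind: "independent (insert v B)" using B(2) by (rule independent_insertI)
    have "B \<subseteq> span C" using B(1) assms(2) C(3) by (meson order_trans)
    moreover have "v \<in> span C" using C(3) v by (rule subsetD)
    ultimately have "insert v B \<subseteq> span C" by simp
    then have h: "finite (insert v B) \<and> card (insert v B) \<le> card C" using independent_span_bound[OF fC ind] by simp
    have "v \<notin> B" using vB span_base by metis
    then have "card (insert v B) = Suc (card B)" using h by simp
    then show False using h B(4) C(4) assms(5) by simp
  qed
qed

end

context vector_space_pair begin

lemma rank_nullity:
  assumes lin: "Vector_Spaces.linear s1 s2 f" and W: "vs1.subspace W" and F: "finite F" "W \<subseteq> vs1.span F"
  shows "vs1.dim W = vs1.dim {x\<in>W. f x = 0} + vs2.dim (f ` W)"
proof -
  interpret lf: Vector_Spaces.linear s1 s2 f by fact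
  let ?K = "{x\<in>W. f x = 0}"
  obtain BK where BK: "BK \<subseteq> ?K" "vs1.independent BK" "?K \<subseteq> vs1.span BK" "card BK = vs1.dim ?K"
    using vs1.basis_exists by blast
  obtain B where B: "BK \<subseteq> B" "B \<subseteq> W" "vs1.independent B" "W \<subseteq> vs1.span B"
    using vs1.maximal_independent_subset_extend[of BK W] BK by auto
  have fB: "finite B" using vs1.independent_span_bound[OF F(1) B(3)] B(2) F(2) by auto
  have dW: "vs1.dim W = card B" using vs1.basis_card_eq_dim[OF B(2) B(4) B(3)] by simp
  let ?C = "B - BK"
  have fC: "finite ?C" using fB by auto
  have sC: "vs1.span ?C \<subseteq> W" using vs1.span_minimal[of ?C W] B(2) W by auto
  have sBK: "vs1.span BK \<subseteq> W" using vs1.span_minimal[of BK W] BK(1) W by auto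
  have inj: "inj_on f (vs1.span ?C)"
    unfolding lf.inj_on_iff_eq_0[OF vs1.subspace_span]
  proof (intro ballI impI)
    fix x assume x: "x \<in> vs1.span ?C" "f x = 0"
    then have "x \<in> ?K" using sC by auto
    then have "x \<in> vs1.span BK" using BK(3) by auto
    then show "x = 0" using vs1.span_disjoint_Int[OF B(3), of ?C BK x] x B(1) by auto
  qed
  have indC: "vs2.independent (f ` ?C)"
    using lf.independent_injective_image[OF vs1.independent_mono[OF B(3)] inj] by auto
  have cardC: "card (f ` ?C) = card ?C"
    using card_image[OF inj_on_subset[OF inj vs1.span_superset]] .
  have span: "f ` W \<subseteq> vs2.span (f ` ?C)"
  proof
    fix y assume "y \<in> f ` W"
    then obtain x where x: "x \<in> W" "y = f x" by auto
    have "?C \<union> BK = B" using B(1) by blast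
    then have "x \<in> vs1.span (?C \<union> BK)" using B(4) x(1) by auto
    then obtain u v where uv: "x = u + v" "u \<in> vs1.span ?C" "v \<in> vs1.span BK"
      unfolding vs1.span_Un by blast
    have "\<And>b. b \<in> BK \<Longrightarrow> f b = 0" using BK(1) by auto
    then have "f v = 0" using lf.eq_0_on_span uv(3) by blast
    then have "y = f u" using uv x by (simp add: lf.add)
    then show "y \<in> vs2.span (f ` ?C)" using uv(2) lf.span_image by auto
  qed
  have "f ` ?C \<subseteq> f ` W" using B(2) by auto
  then have dI: "vs2.dim (f ` W) = card ?C"
    using vs2.basis_card_eq_dim[OF _ span indC] cardC by simp
  have "card B = card BK + card ?C" using fB B(1) card_Diff_subset[of BK B] card_mono[OF fB B(1)] finite_subset[OF B(1) fB] by simp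
  then show ?thesis using dW dI BK(4) by simp
qed

end




interpretation CV: vector_space "cscale :: complex \<Rightarrow> ('a \<Rightarrow> complex) \<Rightarrow> ('a \<Rightarrow> complex)"
  by (rule vector_space_cscale)

lemma sum_fun_apply: "(\<Sum>i\<in>A. f i) x = (\<Sum>i\<in>A. f i x)"
  by (induction A rule: infinite_finite_induct) auto

lemma cscale_apply[simp]: "cscale a f x = a * f x"
  by (simp add: cscale_def)

definition Zs :: "'a set \<Rightarrow> ('a \<Rightarrow> complex) set" where
  "Zs I = {x. \<forall>i. i \<notin> I \<longrightarrow> x i = 0}"

definition cunit :: "'a \<Rightarrow> 'a \<Rightarrow> complex" where
  "cunit i = (\<lambda>j. if j = i then 1 else 0)"

lemma Zs_expand:
  assumes "finite I" "x \<in> Zs I"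
  shows "(\<Sum>i\<in>I. cscale (x i) (cunit i)) = x"
proof
  fix j
  have "(\<Sum>i\<in>I. cscale (x i) (cunit i)) j = (\<Sum>i\<in>I. if j = i then x i else 0)"
    by (auto simp: sum_fun_apply cunit_def intro!: sum.cong)
  also have "\<dots> = x j" using assms by (auto simp: Zs_def)
  finally show "(\<Sum>i\<in>I. cscale (x i) (cunit i)) j = x j" .
qed

lemma subspace_Zs: "CV.subspace (Zs I)"
  by (auto simp: CV.subspace_def Zs_def)

lemma cunit_inj: "inj cunit"
proof (rule injI)
  fix i j :: 'a assume "cunit i = cunit j"
  then have "cunit i i = cunit j i" by simp
  then show "i = j" by (auto simp: cunit_def split: if_splits)
qed

lemma cunit_indep: "CV.independent (cunit ` I)"
  unfolding CV.independent_explicit_module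
proof (intro allI impI)
  fix t u v
  assume t: "finite t" "t \<subseteq> cunit ` I" and s: "(\<Sum>v\<in>t. cscale (u v) v) = 0" and v: "v \<in> t"
  then obtain i where i: "v = cunit i" by auto
  have "0 = (\<Sum>v\<in>t. cscale (u v) v) i" using s by simp
  also have "\<dots> = (\<Sum>w\<in>t. u w * w i)" by (simp add: sum_fun_apply)
  also have "\<dots> = u v * v i + (\<Sum>w\<in>t - {v}. u w * w i)"
    using t v by (simp add: sum.remove)
  also have "(\<Sum>w\<in>t - {v}. u w * w i) = 0"
  proof (rule sum.neutral, rule ballI)
    fix w assume w: "w \<in> t - {v}"
    then obtain j where j: "w = cunit j" using t by auto
    then have "j \<noteq> i" using w i by auto
    then show "u w * w i = 0" using j by (simp add: cunit_def)
  qed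
  finally show "u v = 0" using i by (simp add: cunit_def)
qed

lemma dim_Zs:
  assumes "finite I"
  shows "CV.dim (Zs I) = card I"
proof (rule CV.dim_unique[of "cunit ` I"])
  show "cunit ` I \<subseteq> Zs I" by (auto simp: Zs_def cunit_def)
  show "Zs I \<subseteq> CV.span (cunit ` I)"
  proof
    fix x assume "x \<in> Zs I"
    then have "x = (\<Sum>i\<in>I. cscale (x i) (cunit i))" using Zs_expand assms by metis
    also have "\<dots> \<in> CV.span (cunit ` I)"
      by (intro CV.span_sum CV.span_scale CV.span_base) auto
    finally show "x \<in> CV.span (cunit ` I)" .
  qed
  show "CV.independent (cunit ` I)" by (rule cunit_indep)
  show "card (cunit ` I) = card I" using card_image[OF inj_on_subset[OF cunit_inj]] by simp
qed

lemma Zs_span: "finite I \<Longrightarrow> Zs I \<subseteq> CV.span (cunit ` I)"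
proof
  fix x assume "finite I" "x \<in> Zs I"
  then have "x = (\<Sum>i\<in>I. cscale (x i) (cunit i))" using Zs_expand by metis
  also have "\<dots> \<in> CV.span (cunit ` I)"
    by (intro CV.span_sum CV.span_scale CV.span_base) auto
  finally show "x \<in> CV.span (cunit ` I)" .
qed




definition mon :: "nat \<Rightarrow> (nat \<Rightarrow> nat) \<Rightarrow> (nat \<Rightarrow> complex) \<Rightarrow> complex" where
  "mon N \<alpha> x = (\<Prod>k\<le>N. x k ^ \<alpha> k)"

lemma peval_mon: "peval N d g x = (\<Sum>\<alpha>\<in>mons N d. g \<alpha> * mon N \<alpha> x)"
  by (simp add: peval_def mon_def)

lemma finite_mons: "finite (mons N d)"
proof -
  let ?h = "\<lambda>f::nat\<Rightarrow>nat. \<lambda>j. if j \<le> N then f j else 0"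
  have "mons N d \<subseteq> ?h ` (PiE {..N} (\<lambda>_. {..d}))"
  proof
    fix \<alpha> assume a: "\<alpha> \<in> mons N d"
    have "restrict \<alpha> {..N} \<in> PiE {..N} (\<lambda>_. {..d})"
    proof -
      have "\<And>j. j \<le> N \<Longrightarrow> \<alpha> j \<le> d"
      proof -
        fix j assume "j \<le> N"
        then have "\<alpha> j \<le> (\<Sum>k\<le>N. \<alpha> k)" by (intro member_le_sum) auto
        then show "\<alpha> j \<le> d" using a by (simp add: mons_def)
      qed
      then show ?thesis by auto
    qed
    moreover have "\<alpha> = ?h (restrict \<alpha> {..N})" using a by (auto simp: mons_def fun_eq_iff)
    ultimately show "\<alpha> \<in> ?h ` (PiE {..N} (\<lambda>_. {..d}))" by blast
  qed
  moreover have "finite (PiE {..N} (\<lambda>_::nat. {..d::nat}))" by (intro finite_PiE) auto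
  ultimately show ?thesis using finite_subset by blast
qed

definition rep :: "nat \<Rightarrow> nat \<Rightarrow> ((nat \<Rightarrow> complex) \<Rightarrow> complex) \<Rightarrow> bool" where
  "rep N d f \<longleftrightarrow> (\<exists>g\<in>Pspace N d. \<forall>x. peval N d g x = f x)"

lemma rep_sum_mon:
  assumes A: "finite A" and b: "\<And>i. i \<in> A \<Longrightarrow> \<beta> i \<in> mons N d"
  shows "rep N d (\<lambda>x. \<Sum>i\<in>A. c i * mon N (\<beta> i) x)"
proof -
  define g where "g = (\<lambda>\<alpha>. \<Sum>i\<in>{i\<in>A. \<beta> i = \<alpha>}. c i)"
  have "g \<in> Pspace N d"
  proof -
    have "\<And>\<alpha>. \<alpha> \<notin> mons N d \<Longrightarrow> g \<alpha> = 0"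
    proof -
      fix \<alpha> assume "\<alpha> \<notin> mons N d"
      then have e: "{i\<in>A. \<beta> i = \<alpha>} = {}" using b by auto
      show "g \<alpha> = 0" unfolding g_def e by simp
    qed
    then show ?thesis by (auto simp: Pspace_def)
  qed
  moreover have "\<forall>x. peval N d g x = (\<Sum>i\<in>A. c i * mon N (\<beta> i) x)"
  proof
    fix x
    have "peval N d g x = (\<Sum>\<alpha>\<in>mons N d. \<Sum>i\<in>{i\<in>A. \<beta> i = \<alpha>}. c i * mon N (\<beta> i) x)"
      unfolding peval_mon g_def sum_distrib_right by (intro sum.cong refl) auto
    also have "\<dots> = (\<Sum>i\<in>A. c i * mon N (\<beta> i) x)"
      by (rule sum.group[OF A finite_mons]) (use b in auto)
    finally show "peval N d g x = (\<Sum>i\<in>A. c i * mon N (\<beta> i) x)" .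
  qed
  ultimately show ?thesis unfolding rep_def by blast
qed

lemma rep_peval: "rep N d f \<Longrightarrow> \<exists>g\<in>Pspace N d. \<forall>x. f x = (\<Sum>\<alpha>\<in>mons N d. g \<alpha> * mon N \<alpha> x)"
  unfolding rep_def peval_mon by metis

lemma mon_add: "mon N (\<lambda>j. \<alpha> j + \<beta> j) x = mon N \<alpha> x * mon N \<beta> x"
  by (simp add: mon_def power_add prod.distrib)

lemma mons_add: "\<alpha> \<in> mons N d1 \<Longrightarrow> \<beta> \<in> mons N d2 \<Longrightarrow> (\<lambda>j. \<alpha> j + \<beta> j) \<in> mons N (d1 + d2)"
  by (simp add: mons_def sum.distrib)

lemma rep_mult:
  assumes "rep N d1 f" "rep N d2 h"
  shows "rep N (d1 + d2) (\<lambda>x. f x * h x)"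
proof -
  obtain g1 where g1: "\<forall>x. f x = (\<Sum>\<alpha>\<in>mons N d1. g1 \<alpha> * mon N \<alpha> x)" using rep_peval[OF assms(1)] by blast
  obtain g2 where g2: "\<forall>x. h x = (\<Sum>\<alpha>\<in>mons N d2. g2 \<alpha> * mon N \<alpha> x)" using rep_peval[OF assms(2)] by blast
  have eq: "(\<lambda>x. f x * h x) = (\<lambda>x. \<Sum>p\<in>mons N d1 \<times> mons N d2. (g1 (fst p) * g2 (snd p)) * mon N (\<lambda>j. fst p j + snd p j) x)"
  proof
    fix x
    have "f x * h x = (\<Sum>\<alpha>\<in>mons N d1. \<Sum>\<beta>\<in>mons N d2. (g1 \<alpha> * mon N \<alpha> x) * (g2 \<beta> * mon N \<beta> x))"
      using g1 g2 by (simp add: sum_product)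
    also have "\<dots> = (\<Sum>p\<in>mons N d1 \<times> mons N d2. (g1 (fst p) * g2 (snd p)) * mon N (\<lambda>j. fst p j + snd p j) x)"
      by (simp add: sum.cartesian_product mon_add mult_ac case_prod_unfold)
    finally show "f x * h x = \<dots>" .
  qed
  show ?thesis unfolding eq
    by (rule rep_sum_mon) (auto simp: finite_mons intro: mons_add)
qed

lemma rep_const: "rep N 0 (\<lambda>x. c)"
proof -
  have "rep N 0 (\<lambda>x. \<Sum>i\<in>{()}. c * mon N (\<lambda>_. 0) x)"
    by (rule rep_sum_mon) (auto simp: mons_def)
  then show ?thesis by (simp add: mon_def)
qed

lemma rep_linf: "rep N 1 (linf N c)"
proof -
  let ?u = "\<lambda>j::nat. \<lambda>k::nat. if k = j then 1 else (0::nat)"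
  have "rep N 1 (\<lambda>x. \<Sum>j\<in>{..N}. c j * mon N (?u j) x)"
    by (rule rep_sum_mon) (auto simp: mons_def)
  moreover have "\<And>x j. j \<in> {..N} \<Longrightarrow> mon N (?u j) x = x j"
  proof -
    fix x j assume "j \<in> {..N}"
    then have "mon N (?u j) x = (\<Prod>k\<in>{..N}. if k = j then x k else 1)"
      unfolding mon_def by (intro prod.cong) auto
    also have "\<dots> = x j" using \<open>j \<in> {..N}\<close> by (simp add: prod.delta)
    finally show "mon N (?u j) x = x j" .
  qed
  moreover have "(\<lambda>x. \<Sum>j\<in>{..N}. c j * mon N (?u j) x) = linf N c"
  proof
    fix x show "(\<Sum>j\<in>{..N}. c j * mon N (?u j) x) = linf N c x"
      unfolding linf_def by (intro sum.cong refl) (simp add: \<open>\<And>x j. j \<in> {..N} \<Longrightarrow> mon N (?u j) x = x j\<close>)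
  qed
  ultimately show ?thesis by simp
qed

lemma rep_prod:
  assumes "finite A" "\<And>i. i \<in> A \<Longrightarrow> rep N (dg i) (f i)"
  shows "rep N (\<Sum>i\<in>A. dg i) (\<lambda>x. \<Prod>i\<in>A. f i x)"
  using assms
proof (induction A rule: finite_induct)
  case empty
  then show ?case using rep_const[of N 1] by simp
next
  case (insert a A)
  have "rep N (dg a + (\<Sum>i\<in>A. dg i)) (\<lambda>x. f a x * (\<Prod>i\<in>A. f i x))"
    using insert by (intro rep_mult) auto
  then show ?case using insert by simp
qed

lemma rep_power: assumes "rep N d f" shows "rep N (d * n) (\<lambda>x. f x ^ n)"
proof -
  have "rep N (\<Sum>i\<in>{..<n}. d) (\<lambda>x. \<Prod>i\<in>{..<n}. f x)"
    by (rule rep_prod) (use assms in auto)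
  then show ?thesis by (simp add: mult.commute)
qed

lemma rep_scale: "rep N d f \<Longrightarrow> rep N d (\<lambda>x. c * f x)"
  using rep_mult[OF rep_const[of N c]] by simp




definition lin :: "(nat \<Rightarrow> complex) \<Rightarrow> (nat \<Rightarrow> complex) \<Rightarrow> complex \<Rightarrow> (nat \<Rightarrow> complex)" where
  "lin p v t = (\<lambda>k. p k + t * v k)"

lemma lin_0[simp]: "lin p v 0 = p" by (simp add: lin_def)

lemma deriv_lin_coord: "((\<lambda>t. lin p v t k) has_field_derivative v k) (at 0)"
  unfolding lin_def by (auto intro!: derivative_eq_intros)

lemma ddir_deriv: "((\<lambda>t. peval N d g (lin p v t)) has_field_derivative ddir N d g p v) (at 0)"
proof -
  have fac: "((\<lambda>t. (lin p v t) k ^ \<alpha> k) has_field_derivative of_nat (\<alpha> k) * (v k * p k ^ (\<alpha> k - 1))) (at 0)" for \<alpha> k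
    using DERIV_power[OF deriv_lin_coord[of p v k], of "\<alpha> k"] by (simp add: lin_def)
  have D: "((\<lambda>t. \<Sum>\<alpha>\<in>mons N d. g \<alpha> * (\<Prod>k\<in>{..N}. lin p v t k ^ \<alpha> k)) has_field_derivative
     (\<Sum>\<alpha>\<in>mons N d. g \<alpha> * (\<Sum>j\<in>{..N}. (of_nat (\<alpha> j) * (v j * p j ^ (\<alpha> j - 1))) * (\<Prod>k\<in>{..N}-{j}. lin p v 0 k ^ \<alpha> k)))) (at 0)"
    by (intro DERIV_sum DERIV_cmult has_field_derivative_prod fac)
  have "(\<Sum>\<alpha>\<in>mons N d. g \<alpha> * (\<Sum>j\<in>{..N}. (of_nat (\<alpha> j) * (v j * p j ^ (\<alpha> j - 1))) * (\<Prod>k\<in>{..N}-{j}. lin p v 0 k ^ \<alpha> k)))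
      = (\<Sum>\<alpha>\<in>mons N d. \<Sum>j\<in>{..N}. v j * (g \<alpha> * (of_nat (\<alpha> j) * p j ^ (\<alpha> j - 1) * (\<Prod>k\<in>{..N}-{j}. p k ^ \<alpha> k))))"
    by (simp add: sum_distrib_left mult_ac)
  also have "\<dots> = ddir N d g p v"
    unfolding ddir_def pderiv_at_def sum_distrib_left by (rule sum.swap)
  finally show ?thesis using D unfolding peval_def by simp
qed

lemma ddir_rep:
  assumes "\<forall>x. peval N d g x = f x" "((\<lambda>t. f (lin p v t)) has_field_derivative D) (at 0)"
  shows "ddir N d g p v = D"
  using DERIV_unique[OF ddir_deriv[of N d g p v]] assms by simp

lemma ddir_euler: "ddir N d g p p = of_nat d * peval N d g p"
proof -
  have eq: "peval N d g (lin p p t) = (1 + t) ^ d * peval N d g p" for t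
  proof -
    have "peval N d g (lin p p t) = (\<Sum>\<alpha>\<in>mons N d. g \<alpha> * ((1 + t) ^ d * mon N \<alpha> p))"
      unfolding peval_mon
    proof (intro sum.cong refl)
      fix \<alpha> assume a: "\<alpha> \<in> mons N d"
      have "mon N \<alpha> (lin p p t) = (\<Prod>k\<le>N. (1 + t) ^ \<alpha> k * p k ^ \<alpha> k)"
        unfolding mon_def lin_def by (intro prod.cong refl) (simp add: power_mult_distrib[symmetric] algebra_simps)
      also have "\<dots> = (1 + t) ^ (\<Sum>k\<le>N. \<alpha> k) * mon N \<alpha> p"
        by (simp add: prod.distrib power_sum mon_def)
      also have "\<dots> = (1 + t) ^ d * mon N \<alpha> p" using a by (simp add: mons_def)
      finally show "g \<alpha> * mon N \<alpha> (lin p p t) = g \<alpha> * ((1 + t) ^ d * mon N \<alpha> p)" by simp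
    qed
    also have "\<dots> = (1 + t) ^ d * peval N d g p"
      unfolding peval_mon sum_distrib_left by (simp add: mult_ac)
    finally show ?thesis .
  qed
  have "((\<lambda>t. (1 + t) ^ d * peval N d g p) has_field_derivative of_nat d * peval N d g p) (at 0)"
    by (auto intro!: derivative_eq_intros)
  then have "((\<lambda>t. peval N d g (lin p p t)) has_field_derivative of_nat d * peval N d g p) (at 0)"
    using eq by simp
  then show ?thesis using DERIV_unique[OF ddir_deriv[of N d g p p]] by simp
qed

lemma lin_in_subspace: "CV.subspace V \<Longrightarrow> p \<in> V \<Longrightarrow> v \<in> V \<Longrightarrow> lin p v t \<in> V"
proof -
  assume V: "CV.subspace V" "p \<in> V" "v \<in> V"
  have "lin p v t = p + cscale t v" by (simp add: lin_def cscale_def fun_eq_iff)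
  then show ?thesis using V CV.subspace_add CV.subspace_scale by metis
qed

lemma ddir_zero_on:
  assumes "CV.subspace V" "p \<in> V" "v \<in> V" "\<forall>x\<in>V. peval N d g x = 0"
  shows "ddir N d g p v = 0"
proof -
  have "(\<lambda>t. peval N d g (lin p v t)) = (\<lambda>t. 0)"
    using assms lin_in_subspace by auto
  then show ?thesis using DERIV_unique[OF ddir_deriv[of N d g p v]] DERIV_const[of 0 "at 0"] by simp
qed

lemma ddir_add: "ddir N d g p (x + y) = ddir N d g p x + ddir N d g p y"
  by (simp add: ddir_def distrib_right sum.distrib)

lemma ddir_scale: "ddir N d g p (cscale c x) = c * ddir N d g p x"
  by (simp add: ddir_def sum_distrib_left mult.assoc)

lemma ddir_zero: "ddir N d g p 0 = 0"
  by (simp add: ddir_def)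

lemma ddir_subspace: "CV.subspace {v. ddir N d g p v = 0}"
  by (auto simp: CV.subspace_def ddir_add ddir_scale ddir_zero)

lemma ddir_span:
  assumes "v \<in> CV.span B" "\<forall>u\<in>B. ddir N d g p u = 0"
  shows "ddir N d g p v = 0"
  using assms(1) CV.span_induct[of v B "\<lambda>v. ddir N d g p v = 0"] ddir_subspace assms(2) by auto




interpretation CVP: vector_space_pair "cscale :: complex \<Rightarrow> ('a \<Rightarrow> complex) \<Rightarrow> ('a \<Rightarrow> complex)"
   "cscale :: complex \<Rightarrow> ('b \<Rightarrow> complex) \<Rightarrow> ('b \<Rightarrow> complex)"
  by unfold_locales

lemma linf_add: "linf N c (x + y) = linf N c x + linf N c y"
  by (simp add: linf_def distrib_left sum.distrib)

lemma linf_scale: "linf N c (cscale a x) = a * linf N c x"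
  by (simp add: linf_def sum_distrib_left mult_ac)

lemma linf_zero[simp]: "linf N c 0 = 0"
  by (simp add: linf_def)

lemma linf_lin: "linf N c (lin p v t) = linf N c p + t * linf N c v"
  by (simp add: linf_def lin_def distrib_left sum.distrib sum_distrib_left mult_ac)

lemma deriv_linf: "((\<lambda>t. linf N c (lin p v t)) has_field_derivative linf N c v) (at 0)"
  unfolding linf_lin by (auto intro!: derivative_eq_intros)

lemma linear_cscaleI:
  assumes "\<And>x y. f (x + y) = f x + f y" "\<And>a x. f (cscale a x) = cscale a (f x)"
  shows "Vector_Spaces.linear (cscale :: complex \<Rightarrow> ('a \<Rightarrow> complex) \<Rightarrow> _) (cscale :: complex \<Rightarrow> ('b \<Rightarrow> complex) \<Rightarrow> _) f"
  unfolding Vector_Spaces.linear_iff by (simp add: assms vector_space_cscale)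

lemma lin_subspace_image:
  assumes "Vector_Spaces.linear s1 s2 f" "module.subspace s1 S" shows "module.subspace s2 (f ` S)"
  using module_hom.subspace_image[of s1 s2 f S] assms module_hom_iff_linear by blast

lemma dim_zero: "CV.dim {0} = 0"
  by (rule CV.dim_unique[of "{}"]) (auto simp: CV.independent_empty)

lemma Theta_Zs: "Theta_cone N r l lam e = {x\<in>Zs {..N}. \<forall>i\<in>{1..r}. linf N (l i) x - lam i (e i) * linf N (l 0) x = 0}"
  by (auto simp: Theta_cone_def Zs_def)

lemma subspace_Theta: "CV.subspace (Theta_cone N r l lam e)"
  unfolding CV.subspace_def Theta_cone_def
  by (auto simp: linf_add linf_scale algebra_simps)

locale psetup =
  fixes N d r m :: nat and l lam :: "nat \<Rightarrow> nat \<Rightarrow> complex" and S :: "(nat \<Rightarrow> nat) \<Rightarrow> nat \<Rightarrow> nat \<Rightarrow> complex"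
  assumes N2: "N \<ge> 2" and d1: "d \<ge> 1" and r1: "1 \<le> r" and rN: "r \<le> N"
    and indep: "lin_indep N (Suc r) l"
    and lamA: "\<forall>i\<in>{1..r}. inj_on (lam i) {..<d} \<and> lam i 0 = 0"
    and Sass: "\<forall>e\<in>Delta r d. lin_indep N m (S e) \<and>
           (\<forall>k<m. S e k \<in> Theta_cone N r l lam e - Pi_cone N r l)"
begin

lemma a_indep:
  assumes "\<forall>j\<le>N. (\<Sum>i\<in>{1..r}. b i * (l i j - lam i (e i) * l 0 j)) = 0" "i \<in> {1..r}"
  shows "b i = 0"
proof -
  define c where "c k = (if k = 0 then - (\<Sum>i\<in>{1..r}. b i * lam i (e i)) else b k)" for k
  have "\<forall>j\<le>N. (\<Sum>k<Suc r. c k * l k j) = 0"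
  proof (intro allI impI)
    fix j assume j: "j \<le> N"
    have s: "{..<Suc r} = insert 0 {1..r}" by auto
    have "(\<Sum>k<Suc r. c k * l k j) = c 0 * l 0 j + (\<Sum>k\<in>{1..r}. c k * l k j)" unfolding s by simp
    also have "(\<Sum>k\<in>{1..r}. c k * l k j) = (\<Sum>k\<in>{1..r}. b k * l k j)"
      by (intro sum.cong refl) (auto simp: c_def)
    also have "c 0 * l 0 j + (\<Sum>k\<in>{1..r}. b k * l k j) = (\<Sum>i\<in>{1..r}. b i * (l i j - lam i (e i) * l 0 j))"
      by (simp add: c_def sum_distrib_left sum_distrib_right right_diff_distrib sum_subtractf mult_ac)
    finally show "(\<Sum>k<Suc r. c k * l k j) = 0" using assms(1) j by simp
  qed
  then have "c i = 0" using indep assms(2) unfolding lin_indep_def by auto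
  then show "b i = 0" using assms(2) by (simp add: c_def)
qed

definition Fm :: "(nat \<Rightarrow> nat) \<Rightarrow> (nat \<Rightarrow> complex) \<Rightarrow> (nat \<Rightarrow> complex)" where
  "Fm e x = (\<lambda>i. if i \<in> {1..r} then linf N (\<lambda>j. l i j - lam i (e i) * l 0 j) x else 0)"

definition Gm :: "(nat \<Rightarrow> nat) \<Rightarrow> (nat \<Rightarrow> complex) \<Rightarrow> (nat \<Rightarrow> complex)" where
  "Gm e c = (\<lambda>j. if j \<le> N then (\<Sum>k\<in>{1..r}. c k * cnj (l k j - lam k (e k) * l 0 j)) else 0)"

lemma linear_Fm: "Vector_Spaces.linear cscale cscale (Fm e)"
  by (rule linear_cscaleI) (auto simp: Fm_def linf_add linf_scale fun_eq_iff)

lemma linear_Gm: "Vector_Spaces.linear cscale cscale (Gm e)"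
  by (rule linear_cscaleI) (auto simp: Gm_def fun_eq_iff sum.distrib distrib_right sum_distrib_left mult_ac)

lemma Fm_linf: "linf N (\<lambda>j. l i j - lam i (e i) * l 0 j) x = linf N (l i) x - lam i (e i) * linf N (l 0) x"
  by (simp add: linf_def right_diff_distrib left_diff_distrib sum_subtractf sum_distrib_left mult_ac)

lemma kernel_Fm: "{x\<in>Zs {..N}. Fm e x = 0} = Theta_cone N r l lam e"
  unfolding Theta_Zs by (auto simp: Fm_def fun_eq_iff Fm_linf)

lemma Gram_inj:
  assumes c: "c \<in> Zs {1..r}" and H: "Fm e (Gm e c) = 0"
  shows "c = 0"
proof -
  let ?a = "\<lambda>i j. l i j - lam i (e i) * l 0 j"
  define w where "w j = (\<Sum>i\<in>{1..r}. cnj (c i) * ?a i j)" for j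
  have G: "j \<le> N \<Longrightarrow> Gm e c j = cnj (w j)" for j
    by (simp add: Gm_def w_def)
  have "0 = (\<Sum>i\<in>{1..r}. cnj (c i) * Fm e (Gm e c) i)" using H by simp
  also have "\<dots> = (\<Sum>i\<in>{1..r}. \<Sum>j\<le>N. cnj (c i) * ?a i j * Gm e c j)"
    by (simp add: Fm_def linf_def sum_distrib_left mult_ac)
  also have "\<dots> = (\<Sum>j\<le>N. \<Sum>i\<in>{1..r}. cnj (c i) * ?a i j * Gm e c j)"
    by (rule sum.swap)
  also have "\<dots> = (\<Sum>j\<le>N. w j * cnj (w j))"
    by (intro sum.cong refl) (simp add: w_def G sum_distrib_right)
  also have "\<dots> = of_real (\<Sum>j\<le>N. (norm (w j))\<^sup>2)"
    by (simp only: complex_norm_square of_real_sum)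
  finally have "(\<Sum>j\<le>N. (norm (w j))\<^sup>2) = 0" by (metis of_real_eq_0_iff)
  then have "\<forall>j\<in>{..N}. (norm (w j))\<^sup>2 = 0" by (subst (asm) sum_nonneg_eq_0_iff) auto
  then have "\<forall>j\<le>N. w j = 0" by auto
  then have "\<forall>i\<in>{1..r}. cnj (c i) = 0"
    using a_indep[of "\<lambda>i. cnj (c i)" e] unfolding w_def by blast
  then show "c = 0" using c by (auto simp: Zs_def fun_eq_iff)
qed

lemma Fm_surj: "Zs {1..r} \<subseteq> Fm e ` Zs {..N}"
proof -
  let ?H = "\<lambda>c. Fm e (Gm e c)"
  have linH: "Vector_Spaces.linear cscale cscale ?H"
    using Vector_Spaces.linear_compose[OF linear_Gm linear_Fm] by (simp add: o_def)
  have "Gm e 0 = 0" by (simp add: Gm_def fun_eq_iff)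
  moreover have "Fm e 0 = 0" by (simp add: Fm_def fun_eq_iff)
  ultimately have k: "{c\<in>Zs {1..r}. ?H c = 0} = {0}"
    using Gram_inj subspace_Zs CV.subspace_0 by auto
  have "CV.dim (Zs {1..r}) = CV.dim {c\<in>Zs {1..r}. ?H c = 0} + CV.dim (?H ` Zs {1..r})"
    by (rule CVP.rank_nullity[OF linH subspace_Zs, of "cunit ` {1..r}"]) (use Zs_span[of "{..N}"] Zs_span[of "{1..r}"] in auto)
  then have d: "CV.dim (?H ` Zs {1..r}) = CV.dim (Zs {1..r})" unfolding k dim_zero by simp
  have sub: "?H ` Zs {1..r} \<subseteq> Zs {1..r}" by (auto simp: Fm_def Zs_def)
  have "Zs {1..r} \<subseteq> ?H ` Zs {1..r}"
    by (rule CV.dim_subspace_eq[OF _ sub _ Zs_span d])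
       (auto intro: lin_subspace_image[OF linH subspace_Zs])
  moreover have "Gm e c \<in> Zs {..N}" for c by (simp add: Gm_def Zs_def)
  ultimately show ?thesis by blast
qed

lemma dim_Theta: "CV.dim (Theta_cone N r l lam e) = N + 1 - r"
proof -
  have "CV.dim (Zs {..N}) = CV.dim {x\<in>Zs {..N}. Fm e x = 0} + CV.dim (Fm e ` Zs {..N})"
    by (rule CVP.rank_nullity[OF linear_Fm subspace_Zs, of "cunit ` {..N}"]) (use Zs_span[of "{..N}"] Zs_span[of "{1..r}"] in auto)
  moreover have "Fm e ` Zs {..N} = Zs {1..r}"
    using Fm_surj by (auto simp: Fm_def Zs_def)
  ultimately have "N + 1 = CV.dim (Theta_cone N r l lam e) + r"
    by (simp add: kernel_Fm dim_Zs)
  then show ?thesis by simp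
qed

end




lemma linf_diff: "linf N (\<lambda>k. a k - c * b k) x = linf N a x - c * linf N b x"
  by (simp add: linf_def right_diff_distrib left_diff_distrib sum_subtractf sum_distrib_left mult_ac)

lemma pts_inj:
  assumes "lin_indep N m u" shows "inj_on u {..<m}"
proof (rule inj_onI, rule ccontr)
  fix a b assume ab: "a \<in> {..<m}" "b \<in> {..<m}" "u a = u b" "a \<noteq> b"
  define c where "c k = (if k = a then 1 else if k = b then -1 else (0::complex))" for k
  have "\<forall>j\<le>N. (\<Sum>k<m. c k * u k j) = 0"
  proof (intro allI impI)
    fix j
    have "(\<Sum>k<m. c k * u k j) = (\<Sum>k<m. (if k = a then u a j else 0) + (if k = b then - u b j else 0))"
      by (intro sum.cong refl) (auto simp: c_def ab(4))
    also have "\<dots> = u a j - u b j" using ab by (simp add: sum.distrib)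
    finally show "(\<Sum>k<m. c k * u k j) = 0" using ab(3) by simp
  qed
  then have "c a = 0" using assms ab(1) unfolding lin_indep_def by auto
  then show False by (simp add: c_def)
qed

lemma pts_indep:
  assumes "lin_indep N m u" shows "CV.independent (u ` {..<m})"
  unfolding CV.independent_explicit_module
proof (intro allI impI)
  fix t w v
  assume t: "finite t" "t \<subseteq> u ` {..<m}" and s: "(\<Sum>v\<in>t. cscale (w v) v) = 0" and v: "v \<in> t"
  have inj: "inj_on u {..<m}" by (rule pts_inj[OF assms])
  define K where "K = {k\<in>{..<m}. u k \<in> t}"
  have tK: "t = u ` K" using t by (auto simp: K_def)
  have injK: "inj_on u K" using inj by (rule inj_on_subset) (auto simp: K_def)
  define c where "c k = (if k \<in> K then w (u k) else 0)" for k
  have "\<forall>j\<le>N. (\<Sum>k<m. c k * u k j) = 0"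
  proof (intro allI impI)
    fix j
    have "(\<Sum>k<m. c k * u k j) = (\<Sum>k\<in>K. w (u k) * u k j)"
      by (rule sum.mono_neutral_cong_right) (auto simp: K_def c_def)
    also have "\<dots> = (\<Sum>v\<in>t. w v * v j)"
      unfolding tK by (rule sum.reindex[OF injK, symmetric, unfolded comp_def])
    also have "\<dots> = (\<Sum>v\<in>t. cscale (w v) v) j" by (simp add: sum_fun_apply)
    finally show "(\<Sum>k<m. c k * u k j) = 0" using s by simp
  qed
  then have c0: "\<forall>k<m. c k = 0" using assms unfolding lin_indep_def by blast
  obtain k where k: "k \<in> K" "v = u k" using v tK by auto
  then have "k < m" by (simp add: K_def)
  then show "w v = 0" using c0[rule_format, OF \<open>k < m\<close>] k by (simp add: c_def)
qed

lemma exists_dual: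
  assumes B: "B \<subseteq> Zs {..N}" "CV.independent B" and w: "w \<in> B"
  shows "\<exists>c. \<forall>x\<in>B. linf N c x = (if x = w then 1 else 0)"
proof -
  obtain C where C: "B \<subseteq> C" "C \<subseteq> Zs {..N}" "CV.independent C" "Zs {..N} \<subseteq> CV.span C"
    using CV.maximal_independent_subset_extend[OF B] by blast
  define c where "c j = CV.representation C (cunit j) w" for j
  have cu: "cunit j \<in> CV.span C" if "j \<le> N" for j
    using C(4) that by (auto simp: Zs_def cunit_def)
  show ?thesis
  proof (intro exI ballI)
    fix x assume x: "x \<in> B"
    then have xZ: "x \<in> Zs {..N}" using B by auto
    have "CV.representation C x = CV.representation C (\<Sum>j\<in>{..N}. cscale (x j) (cunit j))"
      using Zs_expand[OF _ xZ] by simp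
    also have "\<dots> = (\<lambda>b. \<Sum>j\<in>{..N}. CV.representation C (cscale (x j) (cunit j)) b)"
      by (rule CV.representation_sum[OF C(3)]) (auto intro: CV.span_scale cu)
    also have "\<dots> = (\<lambda>b. \<Sum>j\<in>{..N}. x j * CV.representation C (cunit j) b)"
      by (intro ext sum.cong refl) (simp add: CV.representation_scale[OF C(3) cu])
    finally have "CV.representation C x w = linf N c x"
      by (simp add: linf_def c_def mult.commute)
    moreover have "CV.representation C x w = (if x = w then 1 else 0)"
      using CV.representation_basis[OF C(3)] x C(1) by auto
    ultimately show "linf N c x = (if x = w then 1 else 0)" by simp
  qed
qed

definition Qf :: "nat \<Rightarrow> nat \<Rightarrow> (nat \<Rightarrow> nat \<Rightarrow> complex) \<Rightarrow> (nat \<Rightarrow> nat \<Rightarrow> complex) \<Rightarrow> (nat \<Rightarrow> nat) \<Rightarrow> (nat \<Rightarrow> complex) \<Rightarrow> complex" where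
  "Qf N r l lam e x = (\<Prod>i\<in>{1..r}. \<Prod>j<e i. linf N (\<lambda>k. l i k - lam i j * l 0 k) x)"

lemma rep_Qf: "rep N (\<Sum>i\<in>{1..r}. e i) (Qf N r l lam e)"
proof -
  have "rep N (\<Sum>i\<in>{1..r}. e i) (\<lambda>x. \<Prod>i\<in>{1..r}. \<Prod>j<e i. linf N (\<lambda>k. l i k - lam i j * l 0 k) x)"
  proof (rule rep_prod)
    fix i
    have "rep N (\<Sum>j<e i. 1) (\<lambda>x. \<Prod>j<e i. linf N (\<lambda>k. l i k - lam i j * l 0 k) x)"
      by (rule rep_prod) (auto intro: rep_linf[unfolded One_nat_def])
    then show "rep N (e i) (\<lambda>x. \<Prod>j<e i. linf N (\<lambda>k. l i k - lam i j * l 0 k) x)" by simp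
  qed simp
  then show ?thesis by (simp add: Qf_def[abs_def])
qed

lemma Qf_vanish:
  assumes "i \<in> {1..r}" "e' i < e i" "x \<in> Theta_cone N r l lam e'"
  shows "Qf N r l lam e x = 0"
proof -
  have "linf N (\<lambda>k. l i k - lam i (e' i) * l 0 k) x = 0"
    using assms(1,3) by (simp add: Theta_cone_def linf_diff)
  then have "(\<Prod>j<e i. linf N (\<lambda>k. l i k - lam i j * l 0 k) x) = 0"
    using assms(2) by (intro prod_zero) auto
  then show ?thesis unfolding Qf_def using assms(1) by (intro prod_zero) auto
qed

lemma Qf_nonzero:
  assumes lamA: "\<forall>i\<in>{1..r}. inj_on (lam i) {..<d}" and ed: "\<forall>i\<in>{1..r}. e i < d"
    and x: "x \<in> Theta_cone N r l lam e - Pi_cone N r l"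
  shows "Qf N r l lam e x \<noteq> 0"
proof -
  have L0: "linf N (l 0) x \<noteq> 0"
  proof
    assume z: "linf N (l 0) x = 0"
    have "\<forall>i\<le>r. linf N (l i) x = 0"
    proof (intro allI impI)
      fix i assume "i \<le> r"
      show "linf N (l i) x = 0"
      proof (cases "i = 0")
        case True then show ?thesis using z by simp
      next
        case False then have "i \<in> {1..r}" using \<open>i \<le> r\<close> by auto
        then show ?thesis using x z by (auto simp: Theta_cone_def)
      qed
    qed
    then show False using x by (auto simp: Theta_cone_def Pi_cone_def)
  qed
  have H: "linf N (\<lambda>k. l i k - lam i j * l 0 k) x \<noteq> 0" if i: "i \<in> {1..r}" and j: "j \<in> {..<e i}" for i j
  proof -
    have "linf N (\<lambda>k. l i k - lam i j * l 0 k) x = linf N (l i) x - lam i j * linf N (l 0) x"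
      by (rule linf_diff)
    also have "linf N (l i) x = lam i (e i) * linf N (l 0) x" using x i by (auto simp: Theta_cone_def)
    finally have eq: "linf N (\<lambda>k. l i k - lam i j * l 0 k) x = (lam i (e i) - lam i j) * linf N (l 0) x"
      by (simp add: algebra_simps)
    have "lam i (e i) \<noteq> lam i j"
    proof
      assume "lam i (e i) = lam i j"
      moreover have "inj_on (lam i) {..<d}" using lamA i by blast
      moreover have "e i < d" using ed i by blast
      moreover have "j < d" using j \<open>e i < d\<close> by simp
      ultimately have "e i = j" by (auto dest: inj_onD)
      then show False using j by simp
    qed
    then show "linf N (\<lambda>k. l i k - lam i j * l 0 k) x \<noteq> 0" using eq L0 by simp
  qed
  show ?thesis unfolding Qf_def using H by simp
qed




lemma peval_add: "peval N d (g1 + g2) x = peval N d g1 x + peval N d g2 x"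
  by (simp add: peval_def distrib_right sum.distrib)

lemma peval_scale: "peval N d (cscale c g) x = c * peval N d g x"
  by (simp add: peval_def sum_distrib_left mult.assoc)

lemma ddir_gadd: "ddir N d (g1 + g2) p v = ddir N d g1 p v + ddir N d g2 p v"
  by (simp add: ddir_def pderiv_at_def distrib_right distrib_left sum.distrib)

lemma ddir_gscale: "ddir N d (cscale c g) p v = c * ddir N d g p v"
  by (simp add: ddir_def pderiv_at_def sum_distrib_left mult_ac)

lemma Pspace_Zs: "Pspace N d = Zs (mons N d)"
  by (simp add: Pspace_def Zs_def)

lemma restrict_img:
  assumes Img: "CV.subspace Img" and t: "t \<in> Img" "finite I" "t \<in> Zs I"
    and out: "\<forall>x\<in>I. x \<notin> E \<longrightarrow> t x \<noteq> 0 \<longrightarrow> cunit x \<in> Img"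
  shows "(\<lambda>x. if x \<in> E then t x else 0) \<in> Img"
proof -
  have eq: "(\<lambda>x. if x \<in> E then t x else 0) = t - (\<Sum>x\<in>I - E. cscale (t x) (cunit x))"
  proof
    fix y
    have "(\<Sum>x\<in>I - E. cscale (t x) (cunit x)) y = (\<Sum>x\<in>I - E. if y = x then t x else 0)"
      by (auto simp: sum_fun_apply cunit_def intro!: sum.cong)
    also have "\<dots> = (if y \<in> I - E then t y else 0)" using t(2) by simp
    finally show "(if y \<in> E then t y else 0) = (t - (\<Sum>x\<in>I - E. cscale (t x) (cunit x))) y"
      using t(3) by (auto simp: Zs_def)
  qed
  have "(\<Sum>x\<in>I - E. cscale (t x) (cunit x)) \<in> Img"
  proof (rule CV.subspace_sum[OF Img])
    fix x assume x: "x \<in> I - E"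
    show "cscale (t x) (cunit x) \<in> Img"
    proof (cases "t x = 0")
      case True
      then have z: "cscale (t x) (cunit x) = 0" by (simp add: cscale_def fun_eq_iff)
      show ?thesis unfolding z by (rule CV.subspace_0[OF Img])
    next
      case False
      then show ?thesis using out x CV.subspace_scale[OF Img] by auto
    qed
  qed
  then show ?thesis unfolding eq using CV.subspace_diff[OF Img t(1)] by simp
qed

lemma deriv_B:
  assumes Q: "\<forall>x. peval N d0 gQ x = Q x"
    and g: "\<forall>x. peval N d g x = Q x * (linf N c1 x ^ n * linf N c2 x)"
  shows "ddir N d g p w = ddir N d0 gQ p w * (linf N c1 p ^ n * linf N c2 p) +
     (of_nat n * (linf N c1 w * linf N c1 p ^ (n - Suc 0)) * linf N c2 p + linf N c2 w * linf N c1 p ^ n) * Q p"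
proof (rule ddir_rep[OF g])
  have h1: "((\<lambda>t. Q (lin p w t)) has_field_derivative ddir N d0 gQ p w) (at 0)"
    using ddir_deriv[of N d0 gQ p w] Q by simp
  note h2 = DERIV_power[OF deriv_linf[of N c1 p w], of n]
  note h3 = DERIV_mult[OF h2 deriv_linf[of N c2 p w]]
  note h4 = DERIV_mult[OF h1 h3]
  then show "((\<lambda>t. Q (lin p w t) * (linf N c1 (lin p w t) ^ n * linf N c2 (lin p w t))) has_field_derivative
     ddir N d0 gQ p w * (linf N c1 p ^ n * linf N c2 p) +
     (of_nat n * (linf N c1 w * linf N c1 p ^ (n - Suc 0)) * linf N c2 p + linf N c2 w * linf N c1 p ^ n) * Q p) (at 0)"
    by simp
qed

lemma deriv_A:
  assumes Q: "\<forall>x. peval N d0 gQ x = Q x"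
    and g: "\<forall>x. peval N d g x = Q x * linf N c1 x ^ n"
  shows "ddir N d g p w = ddir N d0 gQ p w * linf N c1 p ^ n +
     of_nat n * (linf N c1 w * linf N c1 p ^ (n - Suc 0)) * Q p"
proof (rule ddir_rep[OF g])
  have h1: "((\<lambda>t. Q (lin p w t)) has_field_derivative ddir N d0 gQ p w) (at 0)"
    using ddir_deriv[of N d0 gQ p w] Q by simp
  note h2 = DERIV_power[OF deriv_linf[of N c1 p w], of n]
  note h4 = DERIV_mult[OF h1 h2]
  then show "((\<lambda>t. Q (lin p w t) * linf N c1 (lin p w t) ^ n) has_field_derivative
     ddir N d0 gQ p w * linf N c1 p ^ n + of_nat n * (linf N c1 w * linf N c1 p ^ (n - Suc 0)) * Q p) (at 0)"
    by simp
qed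




context psetup begin

definition sz :: "(nat \<Rightarrow> nat) \<Rightarrow> nat" where "sz e = (\<Sum>i\<in>{1..r}. e i)"

lemma Delta_sz: assumes "e \<in> Delta r d" shows "sz e + 3 \<le> d"
proof -
  have "int (sz e) \<le> int d - 3" using assms by (simp add: Delta_def sz_def)
  then show ?thesis by linarith
qed

lemma Delta_lt: assumes "e \<in> Delta r d" "i \<in> {1..r}" shows "e i < d"
proof -
  have "e i \<le> sz e" unfolding sz_def using assms(2) by (intro member_le_sum) auto
  then show ?thesis using Delta_sz[OF assms(1)] by simp
qed

lemma Delta_out: "e \<in> Delta r d \<Longrightarrow> i \<notin> {1..r} \<Longrightarrow> e i = 0"
  by (simp add: Delta_def)

lemma finite_Delta: "finite (Delta r d)"
proof -
  let ?h = "\<lambda>f::nat\<Rightarrow>nat. \<lambda>j. if j \<in> {1..r} then f j else 0"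
  have "Delta r d \<subseteq> ?h ` (PiE {1..r} (\<lambda>_. {..d}))"
  proof
    fix e assume a: "e \<in> Delta r d"
    have "restrict e {1..r} \<in> PiE {1..r} (\<lambda>_. {..d})"
      using Delta_lt[OF a] by (auto simp: less_imp_le)
    moreover have "e = ?h (restrict e {1..r})" using Delta_out[OF a] by (auto simp: fun_eq_iff)
    ultimately show "e \<in> ?h ` (PiE {1..r} (\<lambda>_. {..d}))" by blast
  qed
  moreover have "finite (PiE {1..r} (\<lambda>_::nat. {..d::nat}))" by (intro finite_PiE) auto
  ultimately show ?thesis using finite_subset by blast
qed

lemma sz_less:
  assumes e: "e \<in> Delta r d" and e': "e' \<in> Delta r d" and le: "\<forall>i\<in>{1..r}. e i \<le> e' i" and ne: "e' \<noteq> e"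
  shows "d - sz e' < d - sz e"
proof -
  have "\<exists>i\<in>{1..r}. e i < e' i"
  proof (rule ccontr)
    assume "\<not> ?thesis"
    then have "\<forall>i\<in>{1..r}. e i = e' i" using le by force
    have "e' j = e j" for j
    proof (cases "j \<in> {1..r}")
      case True then show ?thesis using \<open>\<forall>i\<in>{1..r}. e i = e' i\<close> by simp
    next
      case False then show ?thesis using Delta_out[OF e] Delta_out[OF e'] by simp
    qed
    then have "e' = e" by (simp add: fun_eq_iff)
    then show False using ne by simp
  qed
  then have "sz e < sz e'" unfolding sz_def by (intro sum_strict_mono_ex1) (use le in auto)
  then show ?thesis using Delta_sz[OF e'] by simp
qed

lemma Theta_sub: "Theta_cone N r l lam e \<subseteq> Zs {..N}"
  by (auto simp: Theta_Zs)

lemma basis_ex: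
  assumes e: "e \<in> Delta r d"
  shows "\<exists>B. S e ` {..<m} \<subseteq> B \<and> B \<subseteq> Theta_cone N r l lam e \<and> CV.independent B \<and>
     Theta_cone N r l lam e \<subseteq> CV.span B \<and> finite B \<and> card B = N + 1 - r"
proof -
  have li: "lin_indep N m (S e)" and inT: "\<forall>k<m. S e k \<in> Theta_cone N r l lam e"
    using Sass e by auto
  have "S e ` {..<m} \<subseteq> Theta_cone N r l lam e" using inT by auto
  then obtain B where B: "S e ` {..<m} \<subseteq> B" "B \<subseteq> Theta_cone N r l lam e" "CV.independent B"
      "Theta_cone N r l lam e \<subseteq> CV.span B"
    using CV.maximal_independent_subset_extend[of "S e ` {..<m}" "Theta_cone N r l lam e"] pts_indep[OF li]
    by blast
  have c: "card B = N + 1 - r" using CV.basis_card_eq_dim[OF B(2) B(4) B(3)] dim_Theta by simp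
  then have "finite B" using rN by (intro card_ge_0_finite) simp
  then show ?thesis using B c by blast
qed

definition Bs :: "(nat \<Rightarrow> nat) \<Rightarrow> (nat \<Rightarrow> complex) set" where
  "Bs e = (SOME B. S e ` {..<m} \<subseteq> B \<and> B \<subseteq> Theta_cone N r l lam e \<and> CV.independent B \<and>
     Theta_cone N r l lam e \<subseteq> CV.span B \<and> finite B \<and> card B = N + 1 - r)"

lemma Bs: assumes "e \<in> Delta r d"
  shows "S e ` {..<m} \<subseteq> Bs e \<and> Bs e \<subseteq> Theta_cone N r l lam e \<and> CV.independent (Bs e) \<and>
     Theta_cone N r l lam e \<subseteq> CV.span (Bs e) \<and> finite (Bs e) \<and> card (Bs e) = N + 1 - r"
  unfolding Bs_def by (rule someI_ex, rule basis_ex[OF assms])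

definition phi :: "(nat \<Rightarrow> nat) \<Rightarrow> (nat \<Rightarrow> complex) \<Rightarrow> nat \<Rightarrow> complex" where
  "phi e w = (SOME c. \<forall>x\<in>Bs e. linf N c x = (if x = w then 1 else 0))"

lemma phi: assumes "e \<in> Delta r d" "w \<in> Bs e" "x \<in> Bs e"
  shows "linf N (phi e w) x = (if x = w then 1 else 0)"
proof -
  have "\<exists>c. \<forall>x\<in>Bs e. linf N c x = (if x = w then 1 else 0)"
    using exists_dual[of "Bs e" N w] Bs[OF assms(1)] Theta_sub assms(2) by blast
  then have "\<forall>x\<in>Bs e. linf N (phi e w) x = (if x = w then 1 else 0)"
    unfolding phi_def by (rule someI_ex)
  then show ?thesis using assms(3) by blast
qed

definition Iset :: "((nat \<Rightarrow> nat) \<times> nat \<times> (nat \<Rightarrow> complex)) set" where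
  "Iset = {(e, a, u). e \<in> Delta r d \<and> a < m \<and> u \<in> Bs e}"

definition T :: "((nat \<Rightarrow> nat) \<Rightarrow> complex) \<Rightarrow> ((nat \<Rightarrow> nat) \<times> nat \<times> (nat \<Rightarrow> complex)) \<Rightarrow> complex" where
  "T g = (\<lambda>(e, a, u). if (e, a, u) \<in> Iset then (if u = S e a then peval N d g (S e a) else ddir N d g (S e a) u) else 0)"

lemma linear_T: "Vector_Spaces.linear cscale cscale T"
  by (rule linear_cscaleI) (auto simp: T_def fun_eq_iff peval_add peval_scale ddir_gadd ddir_gscale split: prod.splits)

lemma Iset_Sigma: "Iset = Sigma (Delta r d) (\<lambda>e. {..<m} \<times> Bs e)"
  by (auto simp: Iset_def)

lemma finite_Iset: "finite Iset"
  unfolding Iset_Sigma using finite_Delta Bs by (intro finite_SigmaI) auto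

lemma card_Iset: "card Iset = m * (N - r + 1) * card (Delta r d)"
proof -
  have "card Iset = (\<Sum>e\<in>Delta r d. card ({..<m} \<times> Bs e))"
    unfolding Iset_Sigma using finite_Delta Bs by (intro card_SigmaI) auto
  also have "\<dots> = (\<Sum>e\<in>Delta r d. m * (N - r + 1))"
  proof (intro sum.cong refl)
    fix e assume e: "e \<in> Delta r d"
    have "card (Bs e) = N - r + 1" using Bs[OF e] rN by simp
    then show "card ({..<m} \<times> Bs e) = m * (N - r + 1)" by (simp add: card_cartesian_product)
  qed
  finally show ?thesis by simp
qed

lemma T_Zs: "T g \<in> Zs Iset"
  by (auto simp: T_def Zs_def)

lemma subspace_P: "CV.subspace (Pspace N d)"
  unfolding Pspace_Zs by (rule subspace_Zs)

lemma subspace_Img: "CV.subspace (T ` Pspace N d)"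
  by (rule lin_subspace_image[OF linear_T subspace_P])

lemma kernel_T:
  "{g \<in> Pspace N d. T g = 0} =
   {g \<in> Pspace N d. \<forall>e\<in>Delta r d. \<forall>k<m. sing_at N d g (Theta_cone N r l lam e) (S e k)}"
proof (intro equalityI subsetI)
  fix g assume g: "g \<in> {g \<in> Pspace N d. T g = 0}"
  have Tz: "T g x = 0" for x using g by simp
  have "sing_at N d g (Theta_cone N r l lam e) (S e k)" if e: "e \<in> Delta r d" and k: "k < m" for e k
  proof -
    note B = Bs[OF e]
    have pB: "S e k \<in> Bs e" using B k by auto
    have pT: "S e k \<in> Theta_cone N r l lam e" using Sass e k by auto
    have pv: "peval N d g (S e k) = 0" using Tz[of "(e, k, S e k)"] e k pB by (simp add: T_def Iset_def)
    have "\<forall>u\<in>Bs e. ddir N d g (S e k) u = 0"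
    proof
      fix u assume u: "u \<in> Bs e"
      show "ddir N d g (S e k) u = 0"
      proof (cases "u = S e k")
        case True then show ?thesis using ddir_euler pv by simp
      next
        case False then show ?thesis using Tz[of "(e, k, u)"] e k u by (simp add: T_def Iset_def)
      qed
    qed
    then have "\<forall>v\<in>Theta_cone N r l lam e. ddir N d g (S e k) v = 0"
    proof (intro ballI)
      fix v assume "\<forall>u\<in>Bs e. ddir N d g (S e k) u = 0" "v \<in> Theta_cone N r l lam e"
      moreover have "Theta_cone N r l lam e \<subseteq> CV.span (Bs e)" using B by blast
      ultimately show "ddir N d g (S e k) v = 0" using ddir_span by blast
    qed
    then show ?thesis using pT pv by (simp add: sing_at_def)
  qed
  then show "g \<in> {g \<in> Pspace N d. \<forall>e\<in>Delta r d. \<forall>k<m. sing_at N d g (Theta_cone N r l lam e) (S e k)}"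
    using g by auto
next
  fix g assume g: "g \<in> {g \<in> Pspace N d. \<forall>e\<in>Delta r d. \<forall>k<m. sing_at N d g (Theta_cone N r l lam e) (S e k)}"
  have "T g x = 0" for x
  proof (cases x)
    case (fields e a u)
    show ?thesis
    proof (cases "x \<in> Iset")
      case True
      then have e: "e \<in> Delta r d" "a < m" "u \<in> Bs e" using fields by (auto simp: Iset_def)
      then have s: "sing_at N d g (Theta_cone N r l lam e) (S e a)" using g by auto
      have "Bs e \<subseteq> Theta_cone N r l lam e" using Bs[OF e(1)] by blast
      then have "u \<in> Theta_cone N r l lam e" using e(3) by blast
      then have z1: "ddir N d g (S e a) u = 0" and z2: "peval N d g (S e a) = 0"
        using s by (auto simp: sing_at_def)
      have "(e, a, u) \<in> Iset" using True fields by simp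
      then show ?thesis unfolding fields T_def using z1 z2 by simp
    next
      case False then show ?thesis using fields by (simp add: T_def)
    qed
  qed
  then show "g \<in> {g \<in> Pspace N d. T g = 0}" using g by (auto simp: fun_eq_iff)
qed

end




context psetup begin

lemma vanish_low:
  assumes e: "e \<in> Delta r d" and e': "e' \<in> Delta r d" and i: "i \<in> {1..r}" "e' i < e i"
    and g: "\<forall>x. peval N d g x = Qf N r l lam e x * Hf x" and a: "a < m" and u: "u \<in> Bs e'"
  shows "T g (e', a, u) = 0"
proof -
  have vz: "\<forall>x\<in>Theta_cone N r l lam e'. peval N d g x = 0"
    using Qf_vanish[where i=i and r=r and e'=e' and e=e and N=N and l=l and lam=lam, OF i] g by simp
  have pT: "S e' a \<in> Theta_cone N r l lam e'" using Sass e' a by auto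
  have "Bs e' \<subseteq> Theta_cone N r l lam e'" using Bs[OF e'] by blast
  then have uT: "u \<in> Theta_cone N r l lam e'" using u by blast
  have "ddir N d g (S e' a) u = 0" by (rule ddir_zero_on[OF subspace_Theta pT uT vz])
  moreover have "peval N d g (S e' a) = 0" using vz pT by blast
  ultimately show ?thesis by (simp add: T_def)
qed

lemma unit_img:
  assumes "e \<in> Delta r d" "a < m" "u \<in> Bs e"
  shows "cunit (e, a, u) \<in> T ` Pspace N d"
  using assms
proof (induction "d - sz e" arbitrary: e a u rule: less_induct)
  case less
  note e = less.prems(1)
  let ?Img = "T ` Pspace N d"
  have IH: "cunit x \<in> ?Img" if x: "x \<in> Iset" "\<forall>i\<in>{1..r}. e i \<le> fst x i" "fst x \<noteq> e" for x
  proof -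
    obtain e' a' u' where xe: "x = (e', a', u')" by (cases x) auto
    have h: "e' \<in> Delta r d" "a' < m" "u' \<in> Bs e'" using x(1) xe by (auto simp: Iset_def)
    have "d - sz e' < d - sz e" using sz_less[OF e h(1)] x xe by auto
    then show ?thesis using less.hyps h xe by blast
  qed
  define k where "k = d - sz e"
  have k3: "k \<ge> 3" using Delta_sz[OF e] by (simp add: k_def)
  note B = Bs[OF e]
  have pB: "S e c \<in> Bs e" if "c < m" for c using B that by auto
  have pinj: "S e c = S e c' \<longleftrightarrow> c = c'" if "c < m" "c' < m" for c c'
    using pts_inj[of N m "S e"] Sass e that by (auto dest: inj_onD)
  have Qnz: "Qf N r l lam e (S e c) \<noteq> 0" if "c < m" for c
    using Qf_nonzero[where lam=lam and d=d and e=e and x="S e c" and N=N and l=l and r=r] lamA Delta_lt[OF e] Sass e that by auto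
  obtain gQ where gQ: "\<forall>x. peval N (sz e) gQ x = Qf N r l lam e x"
    using rep_Qf[where N=N and r=r and e=e and l=l and lam=lam] unfolding rep_def sz_def by blast
  have deg: "sz e + (1 * (k - 1) + 1) = d" "sz e + 1 * k = d" using k3 by (auto simp: k_def)
  have subI: "CV.subspace ?Img" by (rule subspace_Img)
  have caseB: "cunit (e, a, u) \<in> ?Img" if au: "a < m" "u \<in> Bs e" "u \<noteq> S e a" for a u
  proof -
    let ?c1 = "phi e (S e a)" and ?c2 = "phi e u"
    have "rep N (sz e + (1 * (k - 1) + 1)) (\<lambda>x. Qf N r l lam e x * (linf N ?c1 x ^ (k - 1) * linf N ?c2 x))"
      by (intro rep_mult rep_Qf[where N=N and r=r and e=e and l=l and lam=lam, folded sz_def] rep_power rep_linf)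
    then obtain g where g: "g \<in> Pspace N d" "\<forall>x. peval N d g x = Qf N r l lam e x * (linf N ?c1 x ^ (k - 1) * linf N ?c2 x)"
      unfolding deg rep_def by blast
    have L1: "linf N ?c1 w = (if w = S e a then 1 else 0)" if "w \<in> Bs e" for w
      using phi[OF e pB[OF au(1)] that] .
    have L2: "linf N ?c2 w = (if w = u then 1 else 0)" if "w \<in> Bs e" for w
      using phi[OF e au(2) that] .
    have vals: "T g (e, c, w) = (if c = a \<and> w = u then Qf N r l lam e (S e a) else 0)"
      if cw: "c < m" "w \<in> Bs e" for c w
    proof -
      have inI: "(e, c, w) \<in> Iset" using e cw by (simp add: Iset_def)
      have dd: "ddir N d g (S e c) w = ddir N (sz e) gQ (S e c) w * (linf N ?c1 (S e c) ^ (k - 1) * linf N ?c2 (S e c)) +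
         (of_nat (k - 1) * (linf N ?c1 w * linf N ?c1 (S e c) ^ (k - 1 - Suc 0)) * linf N ?c2 (S e c) + linf N ?c2 w * linf N ?c1 (S e c) ^ (k - 1)) * Qf N r l lam e (S e c)"
        by (rule deriv_B[OF gQ g(2)])
      have p1: "linf N ?c1 (S e c) = (if c = a then 1 else 0)" using L1[OF pB[OF cw(1)]] pinj[OF cw(1) au(1)] by simp
      have p2: "linf N ?c2 (S e c) = (if S e c = u then 1 else 0)" using L2[OF pB[OF cw(1)]] by simp
      have z1: "(0::complex) ^ (k - 1) = 0" "(0::complex) ^ (k - 1 - Suc 0) = 0"
        "(0::complex) ^ (k - Suc 0) = 0" "(0::complex) ^ (k - Suc (Suc 0)) = 0" using k3 by auto
      show ?thesis
      proof (cases "c = a")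
        case True
        then show ?thesis using inI au(3) dd p1 p2 L2[OF cw(2)] g(2) by (auto simp: T_def)
      next
        case False
        then show ?thesis using inI dd p1 z1 g(2) by (auto simp: T_def)
      qed
    qed
    let ?t = "T g"
    have out: "\<forall>x\<in>Iset. x \<notin> {(e, a, u)} \<longrightarrow> ?t x \<noteq> 0 \<longrightarrow> cunit x \<in> ?Img"
    proof (intro ballI impI)
      fix x assume x: "x \<in> Iset" "x \<notin> {(e, a, u)}" "?t x \<noteq> 0"
      obtain e' a' u' where xe: "x = (e', a', u')" by (cases x) auto
      have h: "e' \<in> Delta r d" "a' < m" "u' \<in> Bs e'" using x(1) xe by (auto simp: Iset_def)
      show "cunit x \<in> ?Img"
      proof (cases "\<exists>i\<in>{1..r}. e' i < e i")
        case True
        then obtain i where "i \<in> {1..r}" "e' i < e i" by blast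
        then have "?t x = 0" using vanish_low[OF e h(1) _ _ g(2) h(2) h(3)] xe by blast
        then show ?thesis using x(3) by simp
      next
        case False
        then have le: "\<forall>i\<in>{1..r}. e i \<le> e' i" by auto
        show ?thesis
        proof (cases "e' = e")
          case True
          then have "?t x = 0" using vals[OF h(2)] h(3) x(2) xe by auto
          then show ?thesis using x(3) by simp
        next
          case False
          then show ?thesis using IH[OF x(1)] le xe by simp
        qed
      qed
    qed
    have tI: "?t \<in> ?Img" using g(1) by blast
    have r: "(\<lambda>x. if x \<in> {(e, a, u)} then ?t x else 0) \<in> ?Img"
      by (rule restrict_img[OF subI tI finite_Iset T_Zs out])
    have "(\<lambda>x. if x \<in> {(e, a, u)} then ?t x else 0) = cscale (Qf N r l lam e (S e a)) (cunit (e, a, u))"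
      unfolding cscale_def cunit_def using vals[OF au(1) au(2)] by (intro ext) auto
    then have "cscale (Qf N r l lam e (S e a)) (cunit (e, a, u)) \<in> ?Img" using r by simp
    then have "cscale (inverse (Qf N r l lam e (S e a))) (cscale (Qf N r l lam e (S e a)) (cunit (e, a, u))) \<in> ?Img"
      by (rule CV.subspace_scale[OF subI])
    then show ?thesis using Qnz[OF au(1)] by (simp add: CV.scale_scale)
  qed
  show ?case
  proof (cases "u = S e a")
    case False
    then show ?thesis using caseB less.prems by blast
  next
    case True
    have au: "a < m" using less.prems by simp
    let ?c1 = "phi e (S e a)"
    have "rep N (sz e + 1 * k) (\<lambda>x. Qf N r l lam e x * linf N ?c1 x ^ k)"
      by (intro rep_mult rep_Qf[where N=N and r=r and e=e and l=l and lam=lam, folded sz_def] rep_power rep_linf)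
    then obtain g where g: "g \<in> Pspace N d" "\<forall>x. peval N d g x = Qf N r l lam e x * linf N ?c1 x ^ k"
      unfolding deg rep_def by blast
    have L1: "linf N ?c1 w = (if w = S e a then 1 else 0)" if "w \<in> Bs e" for w
      using phi[OF e pB[OF au] that] .
    have z1: "(0::complex) ^ k = 0" "(0::complex) ^ (k - Suc 0) = 0" using k3 by auto
    have valsA: "T g (e, c, w) = 0" if cw: "c < m" "w \<in> Bs e" "c \<noteq> a" for c w
    proof -
      have inI: "(e, c, w) \<in> Iset" using e cw by (simp add: Iset_def)
      have dd: "ddir N d g (S e c) w = ddir N (sz e) gQ (S e c) w * linf N ?c1 (S e c) ^ k +
         of_nat k * (linf N ?c1 w * linf N ?c1 (S e c) ^ (k - Suc 0)) * Qf N r l lam e (S e c)"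
        by (rule deriv_A[OF gQ g(2)])
      have p1: "linf N ?c1 (S e c) = 0" using L1[OF pB[OF cw(1)]] pinj[OF cw(1) au] cw(3) by simp
      show ?thesis using inI dd p1 z1 g(2) by (auto simp: T_def)
    qed
    have valA: "T g (e, a, S e a) = Qf N r l lam e (S e a)"
    proof -
      have inI: "(e, a, S e a) \<in> Iset" using e au pB[OF au] by (simp add: Iset_def)
      have "linf N ?c1 (S e a) = 1" using L1[OF pB[OF au]] by simp
      then show ?thesis using inI g(2) by (simp add: T_def)
    qed
    let ?t = "T g"
    have out: "\<forall>x\<in>Iset. x \<notin> {(e, a, S e a)} \<longrightarrow> ?t x \<noteq> 0 \<longrightarrow> cunit x \<in> ?Img"
    proof (intro ballI impI)
      fix x assume x: "x \<in> Iset" "x \<notin> {(e, a, S e a)}" "?t x \<noteq> 0"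
      obtain e' a' u' where xe: "x = (e', a', u')" by (cases x) auto
      have h: "e' \<in> Delta r d" "a' < m" "u' \<in> Bs e'" using x(1) xe by (auto simp: Iset_def)
      show "cunit x \<in> ?Img"
      proof (cases "\<exists>i\<in>{1..r}. e' i < e i")
        case True
        then obtain i where "i \<in> {1..r}" "e' i < e i" by blast
        then have "?t x = 0" using vanish_low[OF e h(1) _ _ g(2) h(2) h(3)] xe by blast
        then show ?thesis using x(3) by simp
      next
        case False
        then have le: "\<forall>i\<in>{1..r}. e i \<le> e' i" by auto
        show ?thesis
        proof (cases "e' = e")
          case ee: True
          show ?thesis
          proof (cases "a' = a")
            case True
            then have "u' \<noteq> S e a" using x(2) xe ee by auto
            then show ?thesis using caseB[OF h(2)] h(3) xe ee True by simp
          next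
            case False
            then have "?t x = 0" using valsA[OF h(2)] h(3) xe ee by simp
            then show ?thesis using x(3) by simp
          qed
        next
          case False
          then show ?thesis using IH[OF x(1)] le xe by simp
        qed
      qed
    qed
    have tI: "?t \<in> ?Img" using g(1) by blast
    have r: "(\<lambda>x. if x \<in> {(e, a, S e a)} then ?t x else 0) \<in> ?Img"
      by (rule restrict_img[OF subI tI finite_Iset T_Zs out])
    have "(\<lambda>x. if x \<in> {(e, a, S e a)} then ?t x else 0) = cscale (Qf N r l lam e (S e a)) (cunit (e, a, S e a))"
      unfolding cscale_def cunit_def using valA by (intro ext) auto
    then have "cscale (Qf N r l lam e (S e a)) (cunit (e, a, S e a)) \<in> ?Img" using r by simp
    then have "cscale (inverse (Qf N r l lam e (S e a))) (cscale (Qf N r l lam e (S e a)) (cunit (e, a, S e a))) \<in> ?Img"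
      by (rule CV.subspace_scale[OF subI])
    then show ?thesis using Qnz[OF au] True by (simp add: CV.scale_scale)
  qed
qed

lemma main:
  "CV.subspace {g \<in> Pspace N d. \<forall>e\<in>Delta r d. \<forall>k<m. sing_at N d g (Theta_cone N r l lam e) (S e k)}
   \<and> CV.dim (Pspace N d) = CV.dim {g \<in> Pspace N d. \<forall>e\<in>Delta r d. \<forall>k<m. sing_at N d g (Theta_cone N r l lam e) (S e k)}
       + m * (N - r + 1) * card (Delta r d)"
proof -
  have sub: "CV.subspace {g \<in> Pspace N d. T g = 0}"
  proof -
    have "CV.subspace {g. T g = 0}"
      using module_hom.subspace_kernel[of cscale cscale T] linear_T module_hom_iff_linear by blast
    then have "CV.subspace (Pspace N d \<inter> {g. T g = 0})" by (intro CV.subspace_inter subspace_P)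
    moreover have "Pspace N d \<inter> {g. T g = 0} = {g \<in> Pspace N d. T g = 0}" by auto
    ultimately show ?thesis by simp
  qed
  have rn: "CV.dim (Pspace N d) = CV.dim {g \<in> Pspace N d. T g = 0} + CV.dim (T ` Pspace N d)"
    by (rule CVP.rank_nullity[OF linear_T subspace_P, of "cunit ` mons N d"])
       (use finite_mons Zs_span[of "mons N d"] in \<open>auto simp: Pspace_Zs\<close>)
  have "Zs Iset \<subseteq> T ` Pspace N d"
  proof -
    have "cunit ` Iset \<subseteq> T ` Pspace N d" using unit_img by (auto simp: Iset_def)
    then have "CV.span (cunit ` Iset) \<subseteq> T ` Pspace N d" by (rule CV.span_minimal[OF _ subspace_Img])
    then show ?thesis using Zs_span[OF finite_Iset] by blast
  qed
  moreover have "T ` Pspace N d \<subseteq> Zs Iset" using T_Zs by auto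
  ultimately have "T ` Pspace N d = Zs Iset" by blast
  then have "CV.dim (T ` Pspace N d) = m * (N - r + 1) * card (Delta r d)"
    using dim_Zs[OF finite_Iset] card_Iset by simp
  then show ?thesis using sub rn kernel_T by simp
qed
end


theorem proposition2p2:
  fixes N d r m :: nat
    and l :: "nat \<Rightarrow> nat \<Rightarrow> complex"
    and lam :: "nat \<Rightarrow> nat \<Rightarrow> complex"
    and S :: "(nat \<Rightarrow> nat) \<Rightarrow> nat \<Rightarrow> nat \<Rightarrow> complex"
  assumes "N \<ge> 2" and "d \<ge> 1" and "1 \<le> r" and "r \<le> N"
    and "lin_indep N (Suc r) l"
    and "\<forall>i\<in>{1..r}. inj_on (lam i) {..<d} \<and> lam i 0 = 0"
    and "int m \<le> int N - int r + 1"
    and "\<forall>e\<in>Delta r d. lin_indep N m (S e) \<and>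
           (\<forall>k<m. S e k \<in> Theta_cone N r l lam e - Pi_cone N r l)"
  shows "module.subspace cscale
           {g \<in> Pspace N d. \<forall>e\<in>Delta r d. \<forall>k<m. sing_at N d g (Theta_cone N r l lam e) (S e k)}
       \<and> vector_space.dim cscale (Pspace N d)
         = vector_space.dim cscale
             {g \<in> Pspace N d. \<forall>e\<in>Delta r d. \<forall>k<m. sing_at N d g (Theta_cone N r l lam e) (S e k)}
           + m * (N - r + 1) * card (Delta r d)"
  proof -
  interpret psetup N d r m l lam S
    using assms by unfold_locales auto
  show ?thesis using main by simp
qed

end
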